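(* Let $\mathcal{S}$ be a finite set of points of interest, and for each history $X=(s_1,\dots,s_t)$ let $P(\cdot\mid X)$ be a probability distribution on $\mathcal{S}$. For an action (recommendation) $a\in\mathcal{S}$ and parameter $\theta\ge1$ define \[ P(s\mid X,a,\theta)=\begin{cases}P(s\mid X)^{1/\theta}, & s=a,\\ P(s\mid X)/z(\theta), & s\ne a,\end{cases}\qquad z(\theta)=\frac{\sum_{s\neq a}P(s\mid X)}{1-P(s=a\mid X)^{1/\theta}}. \] Then for all $\theta,\theta'\ge1$, all histories $X$ and all $a$, \[ \|P(\cdot\mid X,a,\theta)-P(\cdot\mid X,a,\theta')\|_1\le\frac{2}{e}|\theta-\theta'|. \] *)

theory Defs
  imports Complex_Main
begin

definition zconst :: "'s set \<Rightarrow> ('s \<Rightarrow> real) \<Rightarrow> 's \<Rightarrow> real \<Rightarrow> real" where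
  "zconst S p a \<theta> = (\<Sum>s\<in>S - {a}. p s) / (1 - p a powr (1 / \<theta>))"

definition perturbed :: "'s set \<Rightarrow> ('s \<Rightarrow> real) \<Rightarrow> 's \<Rightarrow> real \<Rightarrow> 's \<Rightarrow> real" where
  "perturbed S p a \<theta> s = (if s = a then p s powr (1 / \<theta>) else p s / zconst S p a \<theta>)"

end

theory Submission
  imports Defs
begin

lemma key_ineq:
  fixes u :: real assumes "u \<ge> 0"
  shows "u * exp (- u) \<le> 1 / exp 1"
proof -
  have "u \<le> exp (u - 1)" using exp_ge_add_one_self[of "u - 1"] by simp
  hence "u * exp (-u) \<le> exp (u - 1) * exp (-u)"
    by (intro mult_right_mono) auto
  also have "\<dots> = 1 / exp 1" by (simp add: exp_diff exp_minus field_simps)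
  finally show ?thesis .
qed

lemma powr_lip_lt:
  fixes q t1 t2 :: real
  assumes q: "0 < q" "q < 1" and t: "1 \<le> t1" "t1 < t2"
  shows "\<bar>q powr (1/t1) - q powr (1/t2)\<bar> \<le> (t2 - t1) / exp 1"
proof -
  define c where "c = - ln q"
  have c: "c > 0" using q by (simp add: c_def)
  define f where "f t = exp (- c / t)" for t
  define f' where "f' t = exp (- c / t) * (c / t^2)" for t
  have feq: "q powr (1/t) = f t" for t
    using q by (simp add: powr_def f_def c_def)
  have D: "DERIV f x :> f' x" if "t1 \<le> x" for x
  proof -
    have "x \<noteq> 0" using that t by auto
    have "DERIV (\<lambda>t. - c / t) x :> c / x^2"
      using \<open>x \<noteq> 0\<close> by (auto intro!: derivative_eq_intros simp: power2_eq_square)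
    from DERIV_chain2[OF DERIV_exp this] show ?thesis
      unfolding f_def f'_def by simp
  qed
  obtain z where z: "t1 < z" "z < t2" "f t2 - f t1 = (t2 - t1) * f' z"
    using MVT2[of t1 t2 f f'] t D by auto
  have zpos: "z \<ge> 1" using z t by auto
  have f'nn: "f' z \<ge> 0" using c zpos by (simp add: f'_def)
  have "f' z = ((c / z) * exp (- (c / z))) / z" by (simp add: f'_def power2_eq_square)
  also have "\<dots> \<le> (c / z) * exp (- (c / z))"
    using zpos c by (simp add: divide_le_eq mult_le_cancel_left1)
  also have "\<dots> \<le> 1 / exp 1" using c zpos by (intro key_ineq) auto
  finally have "f' z \<le> 1 / exp 1" .
  hence "(t2 - t1) * f' z \<le> (t2 - t1) * (1 / exp 1)" using t by (intro mult_left_mono) auto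
  moreover have "(t2 - t1) * f' z \<ge> 0" using t f'nn by auto
  ultimately show ?thesis using z feq by (simp add: abs_if)
qed

lemma powr_lip:
  fixes q t1 t2 :: real
  assumes q: "0 \<le> q" "q \<le> 1" and t: "1 \<le> t1" "1 \<le> t2"
  shows "\<bar>q powr (1/t1) - q powr (1/t2)\<bar> \<le> \<bar>t1 - t2\<bar> / exp 1"
proof (cases "q = 0 \<or> q = 1")
  case True then show ?thesis by auto
next
  case False
  hence q': "0 < q" "q < 1" using q by auto
  consider "t1 < t2" | "t1 = t2" | "t2 < t1" by linarith
  then show ?thesis
  proof cases
    case 1 then show ?thesis using powr_lip_lt[OF q' t(1) 1] by simp
  next
    case 3 then show ?thesis using powr_lip_lt[OF q' t(2) 3] by (simp add: abs_minus_commute)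
  qed simp
qed

theorem lemma5:
  fixes S :: "'s set" and P :: "'s list \<Rightarrow> 's \<Rightarrow> real"
    and X :: "'s list" and a :: 's and \<theta> \<theta>' :: real
  assumes "finite S"
    and "\<And>Y s. s \<in> S \<Longrightarrow> P Y s \<ge> 0"
    and "\<And>Y. (\<Sum>s\<in>S. P Y s) = 1"
    and "a \<in> S"
    and "\<theta> \<ge> 1" and "\<theta>' \<ge> 1"
  shows "(\<Sum>s\<in>S. \<bar>perturbed S (P X) a \<theta> s - perturbed S (P X) a \<theta>' s\<bar>)
           \<le> 2 / exp 1 * \<bar>\<theta> - \<theta>'\<bar>"
proof -
  define p where "p = P X"
  define q where "q = p a"
  define R where "R = (\<Sum>s\<in>S - {a}. p s)"
  have sum1: "q + R = 1" using assms(3)[of X] sum.remove[OF assms(1,4), of p]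
    by (simp add: q_def R_def p_def)
  have R0: "R \<ge> 0" unfolding R_def p_def using assms(2) by (intro sum_nonneg) auto
  have q0: "q \<ge> 0" unfolding q_def p_def using assms(2,4) by auto
  have q1: "q \<le> 1" using sum1 R0 by auto
  define D where "D = \<bar>q powr (1/\<theta>) - q powr (1/\<theta>')\<bar>"
  have Dle: "D \<le> \<bar>\<theta> - \<theta>'\<bar> / exp 1" unfolding D_def using powr_lip[OF q0 q1 assms(5,6)] .
  define K where "K = \<bar>1 / zconst S p a \<theta> - 1 / zconst S p a \<theta>'\<bar>"
  have trm: "\<bar>perturbed S p a \<theta> s - perturbed S p a \<theta>' s\<bar> = p s * K"
    if "s \<in> S - {a}" for s
  proof -
    have "p s \<ge> 0" using that assms(2) by (simp add: p_def)
    hence "\<bar>p s / zconst S p a \<theta> - p s / zconst S p a \<theta>'\<bar> = p s * K"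
      unfolding K_def by (simp add: divide_inverse abs_mult flip: right_diff_distrib)
    thus ?thesis using that by (simp add: perturbed_def)
  qed
  have RK: "R * K \<le> D"
  proof (cases "R = 0")
    case True then show ?thesis by (simp add: D_def)
  next
    case False
    have "R * K = \<bar>R * (1 / zconst S p a \<theta>) - R * (1 / zconst S p a \<theta>')\<bar>"
    proof -
      have "R * K = \<bar>R * (1 / zconst S p a \<theta> - 1 / zconst S p a \<theta>')\<bar>"
        unfolding K_def using R0 by (simp add: abs_mult)
      thus ?thesis by (simp only: right_diff_distrib)
    qed
    also have "\<dots> = \<bar>(1 - q powr (1/\<theta>)) - (1 - q powr (1/\<theta>'))\<bar>"
      using False by (simp add: zconst_def R_def[symmetric] q_def[symmetric])
    also have "\<dots> = D" by (simp add: D_def abs_minus_commute)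
    finally show ?thesis by simp
  qed
  have "(\<Sum>s\<in>S. \<bar>perturbed S p a \<theta> s - perturbed S p a \<theta>' s\<bar>)
      = \<bar>perturbed S p a \<theta> a - perturbed S p a \<theta>' a\<bar>
        + (\<Sum>s\<in>S - {a}. \<bar>perturbed S p a \<theta> s - perturbed S p a \<theta>' s\<bar>)"
    by (rule sum.remove[OF assms(1,4)])
  also have "(\<Sum>s\<in>S - {a}. \<bar>perturbed S p a \<theta> s - perturbed S p a \<theta>' s\<bar>) = R * K"
    unfolding R_def by (simp add: trm sum_distrib_right)
  also have "\<bar>perturbed S p a \<theta> a - perturbed S p a \<theta>' a\<bar> = D"
    by (simp add: perturbed_def D_def q_def)
  finally have "(\<Sum>s\<in>S. \<bar>perturbed S p a \<theta> s - perturbed S p a \<theta>' s\<bar>) \<le> 2 * D"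
    using RK by simp
  also have "\<dots> \<le> 2 / exp 1 * \<bar>\<theta> - \<theta>'\<bar>" using Dle by simp
  finally show ?thesis by (simp add: p_def)
qed

end
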